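(* Let $p$ be a prime and $\alpha,l,n\in\mathbb{N}$. For $r\in\mathbb{Z}$ let $$T_l(n,r)=\frac{l!\,p^l}{\lfloor n/p^{\alpha-1}\rfloor!}\sum_{k\equiv r\ (\mathrm{mod}\ p^{\alpha})}\binom nk(-1)^k\binom{(k-r)/p^{\alpha}}l.$$ Then for all $r\in\mathbb{Z}$, $$\operatorname{ord}_p(T_l(n,r))\geqslant\tau_p\big(\{r\}_{p^{\alpha-1}},\{n-r\}_{p^{\alpha-1}}\big).$$
   Context: When $\alpha=0$, $\lfloor n/p^{-1}\rfloor=pn$. The sum runs over all integers $k\equiv r\pmod{p^\alpha}$, with $\binom nk=0$ unless $0\le k\le n$; $\binom xl=x(x-1)\cdots(x-l+1)/l!$. $\operatorname{ord}_p$ is the $p$-adic order. For an integer $a$ and positive real $m$, $\{a\}_m$ is the unique number in $[0,m)$ with $a-\{a\}_m\in m\mathbb{Z}$. $\tau_p(a,b)$ is the number of carries when adding $a,b\in\mathbb{N}$ in base $p$. *)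

theory Defs
  imports "HOL-Computational_Algebra.Computational_Algebra" "HOL-Number_Theory.Number_Theory"
begin

definition ord_rat :: "nat \<Rightarrow> rat \<Rightarrow> int" where
  "ord_rat p q = (case quotient_of q of (a, b) \<Rightarrow>
       int (multiplicity (int p) a) - int (multiplicity (int p) b))"

text \<open>Carry into position i when adding a and b in base p (carry 0 = 0).\<close>
fun carry :: "nat \<Rightarrow> nat \<Rightarrow> nat \<Rightarrow> nat \<Rightarrow> nat" where
  "carry p a b 0 = 0"
| "carry p a b (Suc i) = (a div p ^ i mod p + b div p ^ i mod p + carry p a b i) div p"

definition tau :: "nat \<Rightarrow> nat \<Rightarrow> nat \<Rightarrow> nat" where
  "tau p a b = card {i. carry p a b (Suc i) \<noteq> 0}"

text \<open>floor(n / p^(alpha-1)); for alpha = 0 this is p*n.\<close>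
definition flr :: "nat \<Rightarrow> nat \<Rightarrow> nat \<Rightarrow> nat" where
  "flr p \<alpha> n = (if \<alpha> = 0 then p * n else n div p ^ (\<alpha> - 1))"

text \<open>{a}_{p^(alpha-1)}; for alpha = 0 the modulus is 1/p and the residue of an integer is 0.\<close>
definition fracres :: "nat \<Rightarrow> nat \<Rightarrow> int \<Rightarrow> nat" where
  "fracres p \<alpha> a = (if \<alpha> = 0 then 0 else nat (a mod int (p ^ (\<alpha> - 1))))"

definition T :: "nat \<Rightarrow> nat \<Rightarrow> nat \<Rightarrow> nat \<Rightarrow> int \<Rightarrow> rat" where
  "T p \<alpha> l n r = (fact l * of_nat p ^ l / fact (flr p \<alpha> n)) *
     (\<Sum>k\<in>{k\<in>{0..n}. [int k = r] (mod int (p ^ \<alpha>))}.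
        of_nat (n choose k) * (-1) ^ k * ((of_int ((int k - r) div int (p ^ \<alpha>)) :: rat) gchoose l))"

end

theory Submission
  imports Defs
begin

hide_const (open) UnivPoly.coeff UnivPoly.monom UnivPoly.deg module.smult


definition ff :: "int \<Rightarrow> nat \<Rightarrow> int" where "ff j l = (\<Prod>i<l. j - int i)"
definition W :: "nat \<Rightarrow> nat \<Rightarrow> int \<Rightarrow> int" where "W p l j = int p ^ l * ff j l"

definition chi :: "nat \<Rightarrow> nat \<Rightarrow> nat \<Rightarrow> int \<Rightarrow> nat \<Rightarrow> int" where
 "chi p m l r k = (if int k mod int m = r mod int m then W p l ((int k - r) div int m) else 0)"

definition lam :: "nat \<Rightarrow> nat \<Rightarrow> nat \<Rightarrow> int poly \<Rightarrow> int \<Rightarrow> int" where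
 "lam p m l G r = (\<Sum>k\<le>degree G. coeff G k * chi p m l r k)"

lemma ff_0[simp]: "ff j 0 = 1" by (simp add: ff_def)
lemma ff_Suc: "ff j (Suc l) = ff j l * (j - int l)" by (simp add: ff_def)
lemma ff_Suc_shift: "ff (j + 1) (Suc l) = (j + 1) * ff j l"
proof -
  have "(\<Prod>i<Suc l. j + 1 - int i) = (j + 1 - int 0) * (\<Prod>i<l. j + 1 - int (Suc i))"
    by (rule prod.lessThan_Suc_shift)
  then show ?thesis by (simp add: ff_def)
qed
lemma ff_diff: "ff (j + 1) (Suc l) - ff j (Suc l) = int (Suc l) * ff j l"
proof -
  have "ff (j+1) (Suc l) = (j+1) * ff j l" by (rule ff_Suc_shift)
  moreover have "ff j (Suc l) = ff j l * (j - int l)" by (rule ff_Suc)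
  ultimately show ?thesis by (simp add: algebra_simps)
qed

lemma ff_binom: "ff (int l) K = int (l choose K) * fact K"
proof (induction K arbitrary: l)
  case 0 then show ?case by simp
next
  case (Suc K)
  show ?case
  proof (cases l)
    case 0 then show ?thesis by (auto simp: ff_def)
  next
    case (Suc l')
    have "ff (int l) (Suc K) = (int l' + 1) * ff (int l') K"
      using ff_Suc_shift[of "int l'" K] Suc by (simp add: add.commute)
    also have "\<dots> = (int l' + 1) * int (l' choose K) * fact K" using Suc.IH by simp
    also have "\<dots> = int (Suc l' * (l' choose K)) * fact K" by (simp add: algebra_simps)
    also have "Suc l' * (l' choose K) = Suc K * (Suc l' choose Suc K)"
      by (rule Suc_times_binomial[symmetric])
    finally show ?thesis using Suc by (simp add: algebra_simps)
  qed
qed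

lemma fact_dvd_ff: "(fact K :: int) dvd ff (int l) K"
  by (simp add: ff_binom)

lemma W_diff: "W p l (j + 1) - W p l j = int p * int l * W p (l - 1) j"
proof (cases l)
  case 0 then show ?thesis by (simp add: W_def)
next
  case (Suc l')
  have "W p l (j + 1) - W p l j = int p ^ l * (ff (j+1) (Suc l') - ff j (Suc l'))"
    by (simp add: W_def Suc algebra_simps)
  also have "\<dots> = int p ^ l * (int (Suc l') * ff j l')" by (simp add: ff_diff)
  finally show ?thesis by (simp add: W_def Suc algebra_simps)
qed

lemma lam_bound: "degree G \<le> D \<Longrightarrow> lam p m l G r = (\<Sum>k\<le>D. coeff G k * chi p m l r k)"
  unfolding lam_def by (intro sum.mono_neutral_left) (auto simp: coeff_eq_0)

lemma lam_add: "lam p m l (G + H) r = lam p m l G r + lam p m l H r"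
proof -
  let ?D = "max (degree G) (degree H)"
  have "degree (G+H) \<le> ?D" by (simp add: degree_add_le)
  then show ?thesis
    by (simp add: lam_bound[of "G+H" ?D] lam_bound[of G ?D] lam_bound[of H ?D] sum.distrib algebra_simps)
qed

lemma lam_zero[simp]: "lam p m l 0 r = 0" by (simp add: lam_def)

lemma lam_smult: "lam p m l (smult c G) r = c * lam p m l G r"
  by (simp add: lam_bound[of "smult c G" "degree G"] lam_bound[of G "degree G"] sum_distrib_left algebra_simps)

lemma lam_neg: "lam p m l (- G) r = - lam p m l G r"
  using lam_smult[of p m l "-1" G r] by simp

lemma lam_diff: "lam p m l (G - H) r = lam p m l G r - lam p m l H r"
  using lam_add[of p m l G "-H" r] lam_neg[of p m l H r] by simp

lemma lam_sum: "finite A \<Longrightarrow> lam p m l (\<Sum>i\<in>A. F i) r = (\<Sum>i\<in>A. lam p m l (F i) r)"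
  by (induction A rule: finite_induct) (simp_all add: lam_add)

lemma chi_shift: "chi p m l r (k + c) = chi p m l (r - int c) k"
proof -
  have "(int (k + c) mod int m = r mod int m) \<longleftrightarrow> (int k mod int m = (r - int c) mod int m)"
    by (metis add_diff_cancel_right' diff_add_cancel mod_diff_left_eq mod_add_left_eq of_nat_add)
  then show ?thesis unfolding chi_def by (simp add: algebra_simps)
qed

lemma lam_monom_mult: "lam p m l (monom 1 c * G) r = lam p m l G (r - int c)"
proof -
  let ?D = "degree G"
  have "degree (monom 1 c * G) \<le> ?D + c"
    by (metis add.commute degree_monom_le degree_mult_le order_trans add_le_mono1)
  then have "lam p m l (monom 1 c * G) r = (\<Sum>k\<le>?D + c. coeff (monom 1 c * G) k * chi p m l r k)"
    by (rule lam_bound)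
  also have "\<dots> = (\<Sum>k\<in>{0 + c..?D + c}. coeff (monom 1 c * G) k * chi p m l r k)"
    by (intro sum.mono_neutral_right) (auto simp: coeff_monom_mult)
  also have "\<dots> = (\<Sum>k\<in>{0..?D}. coeff (monom 1 c * G) (k + c) * chi p m l r (k + c))"
    by (rule sum.shift_bounds_cl_nat_ivl)
  also have "\<dots> = (\<Sum>k\<le>?D. coeff G k * chi p m l (r - int c) k)"
    by (intro sum.cong) (auto simp: coeff_monom_mult chi_shift)
  also have "\<dots> = lam p m l G (r - int c)" by (simp add: lam_def)
  finally show ?thesis .
qed

lemma lam_mult: "lam p m l (G * H) r = (\<Sum>c\<le>degree G. coeff G c * lam p m l H (r - int c))"
proof -
  have "G * H = (\<Sum>c\<le>degree G. smult (coeff G c) (monom 1 c * H))"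
    apply (subst (1) poly_as_sum_of_monoms[symmetric])
    apply (simp add: sum_distrib_right)
    apply (intro sum.cong refl)
    by (metis mult_smult_left smult_monom mult.right_neutral)
  then show ?thesis by (simp add: lam_sum lam_smult lam_monom_mult)
qed

lemma lam_monom1: "lam p m l (monom 1 c) r = chi p m l (r - int c) 0"
  using lam_monom_mult[of p m l c 1 r] by (simp add: lam_def)

definition good :: "nat \<Rightarrow> nat \<Rightarrow> nat \<Rightarrow> int poly \<Rightarrow> bool" where
  "good p m B G \<longleftrightarrow> (\<forall>l r. int p ^ B dvd lam p m l G r)"

lemma good_mult: "good p m B H \<Longrightarrow> good p m B (G * H)"
  unfolding good_def by (auto simp: lam_mult intro!: dvd_sum dvd_mult)

lemma good_add: "good p m B G \<Longrightarrow> good p m B H \<Longrightarrow> good p m B (G + H)"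
  unfolding good_def by (auto simp: lam_add)

lemma good_sum: "finite A \<Longrightarrow> (\<And>i. i \<in> A \<Longrightarrow> good p m B (F i)) \<Longrightarrow> good p m B (\<Sum>i\<in>A. F i)"
  unfolding good_def by (auto simp: lam_sum intro!: dvd_sum)

lemma good_smult: "good p m B H \<Longrightarrow> int p ^ e dvd c \<Longrightarrow> good p m (e + B) (smult c H)"
  unfolding good_def by (auto simp: lam_smult power_add intro!: mult_dvd_mono)

lemma good_0: "good p m 0 G" by (simp add: good_def)

lemma good_mono: "good p m B G \<Longrightarrow> B' \<le> B \<Longrightarrow> good p m B' G"
  unfolding good_def by (meson le_imp_power_dvd dvd_trans)

lemma lam_monom1': "lam p m l (monom 1 c) r = chi p m l r c"
  using lam_monom1[of p m l c r] chi_shift[of p m l r 0 c] by simp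

lemma chi_step:
  assumes "m > 0"
  shows "chi p m l (r - int m) k - chi p m l r k = int p * int l * chi p m (l - 1) r k"
proof -
  have 1: "(r - int m) mod int m = r mod int m" by (simp add: mod_diff_right_eq[symmetric])
  have e: "int k - (r - int m) = (int k - r) + int m" by simp
  have 2: "(int k - (r - int m)) div int m = (int k - r) div int m + 1"
    unfolding e using assms by (intro div_add_self2) simp
  show ?thesis unfolding chi_def 1 2 using W_diff[of p l "(int k - r) div int m"] by simp
qed

lemma lam_step:
  assumes "m > 0"
  shows "lam p m l ((1 - monom 1 m) * H) r = - (int p * int l) * lam p m (l - 1) H r"
proof -
  have "(1 - monom 1 m) * H = H - monom 1 m * H" by (simp add: algebra_simps)
  then have "lam p m l ((1 - monom 1 m) * H) r = lam p m l H r - lam p m l H (r - int m)"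
    by (simp add: lam_diff lam_monom_mult)
  also have "\<dots> = - (\<Sum>k\<le>degree H. coeff H k * (chi p m l (r - int m) k - chi p m l r k))"
    by (simp add: lam_def sum_subtractf algebra_simps)
  also have "\<dots> = - (int p * int l) * lam p m (l - 1) H r"
    by (simp add: chi_step[OF assms] lam_def sum_distrib_left sum_negf algebra_simps)
  finally show ?thesis .
qed

lemma lam_iter:
  assumes "m > 0"
  shows "lam p m l ((1 - monom 1 m) ^ K * H) r = (- int p) ^ K * ff (int l) K * lam p m (l - K) H r"
proof (induction K arbitrary: l)
  case 0 then show ?case by simp
next
  case (Suc K)
  have "lam p m l ((1 - monom 1 m) ^ Suc K * H) r = lam p m l ((1 - monom 1 m) * ((1 - monom 1 m) ^ K * H)) r"
    by (simp add: algebra_simps)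
  also have "\<dots> = - (int p * int l) * ((- int p) ^ K * ff (int (l - 1)) K * lam p m (l - 1 - K) H r)"
    by (simp add: lam_step[OF assms] Suc.IH)
  also have "\<dots> = (- int p) ^ Suc K * ff (int l) (Suc K) * lam p m (l - Suc K) H r"
  proof (cases l)
    case 0 then show ?thesis by (auto simp: ff_def)
  next
    case (Suc l')
    have "ff (int l' + 1) (Suc K) = (int l' + 1) * ff (int l') K" by (rule ff_Suc_shift)
    then show ?thesis using Suc by (simp add: algebra_simps)
  qed
  finally show ?case .
qed

definition vf :: "nat \<Rightarrow> nat \<Rightarrow> nat" where "vf p K = multiplicity (int p) (fact K :: int)"

lemma good_iter:
  assumes "m > 0" "good p m B H"
  shows "good p m (K + vf p K + B) ((1 - monom 1 m) ^ K * H)"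
  unfolding good_def
proof (intro allI)
  fix l r
  have a: "int p ^ K dvd (- int p) ^ K" by (simp add: power_minus')
  have "int p ^ vf p K dvd (fact K :: int)" unfolding vf_def by (rule multiplicity_dvd)
  then have b: "int p ^ vf p K dvd ff (int l) K" using fact_dvd_ff dvd_trans by blast
  have c: "int p ^ B dvd lam p m (l - K) H r" using assms(2) by (simp add: good_def)
  show "int p ^ (K + vf p K + B) dvd lam p m l ((1 - monom 1 m) ^ K * H) r"
    unfolding lam_iter[OF assms(1)] power_add by (intro mult_dvd_mono a b c)
qed

lemma one_minus_pow:
  "(1 - monom 1 q) ^ K = (\<Sum>i\<le>K. monom ((-1) ^ i * int (K choose i)) (q * i) :: int poly)"
proof -
  have "(1 - monom 1 q :: int poly) ^ K = (monom (-1) q + 1) ^ K"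
    by (simp add: minus_monom[symmetric])
  also have "\<dots> = (\<Sum>i\<le>K. of_nat (K choose i) * monom (-1) q ^ i * 1 ^ (K - i))"
    by (rule binomial_ring)
  also have "\<dots> = (\<Sum>i\<le>K. monom ((-1) ^ i * int (K choose i)) (q * i))"
    by (intro sum.cong refl) (simp add: monom_power of_nat_poly smult_monom mult.commute)
  finally show ?thesis .
qed

lemma lam_one_minus_pow:
  "lam p m l ((1 - monom 1 q) ^ K) r = (\<Sum>i\<le>K. (-1) ^ i * int (K choose i) * chi p m l r (q * i))"
proof -
  have "lam p m l ((1 - monom 1 q) ^ K) r
      = (\<Sum>i\<le>K. lam p m l (smult ((-1) ^ i * int (K choose i)) (monom 1 (q * i))) r)"
    by (simp add: one_minus_pow lam_sum smult_monom)
  then show ?thesis by (simp add: lam_smult lam_monom1')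
qed



lemma pp: "prime p \<Longrightarrow> prime_elem (int p)" by (simp add: prime_nat_int_transfer)

lemma vf_0[simp]: "vf p 0 = 0" by (simp add: vf_def)

lemma vf_Suc:
  assumes "prime p"
  shows "vf p (Suc N) = vf p N + multiplicity (int p) (int (Suc N))"
proof -
  have "(fact (Suc N) :: int) = int (Suc N) * fact N" by (simp add: fact_Suc)
  then show ?thesis unfolding vf_def
    using prime_elem_multiplicity_mult_distrib[OF pp[OF assms], of "int (Suc N)" "fact N"]
    by simp
qed

lemma vf_div:
  assumes "prime p"
  shows "vf p N = N div p + vf p (N div p)"
proof (induction N)
  case 0 then show ?case by simp
next
  case (Suc N)
  have p0: "p > 1" using assms prime_gt_1_nat by blast
  show ?case
  proof (cases "p dvd Suc N")
    case True
    then obtain t where t: "Suc N = p * t" by blast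
    then have t0: "t > 0" by (cases t) auto
    have d: "Suc N div p = Suc (N div p)" using True by (simp add: div_Suc dvd_eq_mod_eq_0)
    have d2: "Suc N div p = t" using t p0 by simp
    have xnz: "int t \<noteq> 0" using t0 by simp
    have nu: "\<not> is_unit (int p)" using p0 by simp
    have "multiplicity (int p) (int p * int t) = Suc (multiplicity (int p) (int t))"
      using multiplicity_times_same[OF xnz nu] p0 by simp
    then have "multiplicity (int p) (int (Suc N)) = Suc (multiplicity (int p) (int t))"
      by (simp only: t of_nat_mult)
    moreover have "vf p t = vf p (t - 1) + multiplicity (int p) (int t)"
      using vf_Suc[OF assms, of "t - 1"] t0 by simp
    moreover have "N div p = t - 1" using d d2 by simp
    ultimately show ?thesis using Suc.IH vf_Suc[OF assms, of N] d d2 by simp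
  next
    case False
    have d: "Suc N div p = N div p" using False by (simp add: div_Suc dvd_eq_mod_eq_0)
    have "multiplicity (int p) (int (Suc N)) = 0"
      using False by (intro not_dvd_imp_multiplicity_0) (metis int_dvd_int_iff)
    then show ?thesis using Suc.IH vf_Suc[OF assms, of N] d by simp
  qed
qed

lemma vf_binom:
  assumes "prime p" "i \<le> M"
  shows "vf p M = multiplicity (int p) (int (M choose i)) + vf p i + vf p (M - i)"
proof -
  have "fact i * fact (M - i) * (M choose i) = fact M"
    using binomial_fact_lemma[OF assms(2)] .
  then have e: "(fact M :: int) = int (M choose i) * (fact i * fact (M - i))"
    by (metis mult.commute of_nat_fact of_nat_mult)
  have n1: "int (M choose i) \<noteq> 0" using assms(2) by simp
  have n2: "(fact i * fact (M - i) :: int) \<noteq> 0" by simp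
  have "multiplicity (int p) (fact M :: int) = multiplicity (int p) (int (M choose i)) + multiplicity (int p) (fact i * fact (M - i) :: int)"
    unfolding e by (rule prime_elem_multiplicity_mult_distrib[OF pp[OF assms(1)] n1 n2])
  also have "multiplicity (int p) (fact i * fact (M - i) :: int) = vf p i + vf p (M - i)"
    unfolding vf_def by (rule prime_elem_multiplicity_mult_distrib[OF pp[OF assms(1)]]) simp_all
  finally show ?thesis unfolding vf_def by simp
qed

lemma vf_le:
  assumes "prime p" "i \<ge> 1"
  shows "vf p i \<le> i - 1"
  using assms(2)
proof (induction i rule: less_induct)
  case (less i)
  have p0: "p > 1" using assms prime_gt_1_nat by blast
  show ?case
  proof (cases "i div p = 0")
    case True then show ?thesis using vf_div[OF assms(1), of i] by simp
  next
    case False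
    have lt: "i div p < i" using less.prems p0 by simp
    have ih: "vf p (i div p) \<le> i div p - 1" using less.IH[OF lt] False by simp
    have "2 * (i div p) \<le> p * (i div p)" using p0 by simp
    also have "\<dots> \<le> i" by simp
    finally show ?thesis using vf_div[OF assms(1), of i] ih False by linarith
  qed
qed



lemma coeff_one_minus_pow:
  "coeff ((1 - monom 1 1) ^ K :: int poly) n = (if n \<le> K then (-1) ^ n * int (K choose n) else 0)"
  by (simp add: one_minus_pow coeff_sum)

lemma u_pow_p:
  assumes "prime p"
  shows "\<exists>w. (1 - monom 1 1) ^ p = (1 - monom 1 p) + smult (int p) ((1 - monom 1 1) * w)"
proof -
  define D :: "int poly" where "D = (1 - monom 1 1) ^ p - (1 - monom 1 p)"
  have p1: "p > 1" using assms prime_gt_1_nat by blast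
  have cD: "int p dvd coeff D n" for n
  proof -
    have c: "coeff D n = (if n \<le> p then (-1) ^ n * int (p choose n) else 0)
        - ((if n = 0 then 1 else 0) - (if n = p then 1 else 0))"
      unfolding D_def coeff_diff coeff_one_minus_pow by (simp add: coeff_monom)
    consider "n = 0" | "0 < n" "n < p" | "n = p" | "n > p" by linarith
    then show ?thesis
    proof cases
      case 1 then show ?thesis using c p1 by simp
    next
      case 2
      then have "p dvd (p choose n)" using assms by (intro dvd_choose_prime) auto
      then have "int p dvd int (p choose n)" by (simp add: int_dvd_int_iff)
      then show ?thesis using c 2 by simp
    next
      case 3
      have "int p dvd (-1) ^ p + 1"
      proof (cases "p = 2")
        case True then show ?thesis by simp
      next
        case False
        then have "odd p" using assms prime_odd_nat p1 by auto
        then show ?thesis by simp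
      qed
      then show ?thesis using c 3 p1 by simp
    next
      case 4 then show ?thesis using c by simp
    qed
  qed
  then have "[:int p:] dvd D" by (simp add: const_poly_dvd_iff)
  then obtain D' where D': "D = [:int p:] * D'" by blast
  have "poly D 1 = 0" unfolding D_def using p1 by (simp add: poly_monom)
  then have "poly D' 1 = 0" using D' p1 by simp
  then have "[:-1, 1:] dvd D'" by (simp add: poly_eq_0_iff_dvd)
  then obtain w0 where w0: "D' = [:-1, 1:] * w0" by blast
  have e: "[:-1, 1:] = - (1 - monom 1 1 :: int poly)" by (simp add: monom_altdef one_pCons)
  have "D' = (1 - monom 1 1) * (- w0)" using w0 e by (simp add: algebra_simps)
  then have "D = smult (int p) ((1 - monom 1 1) * (- w0))" using D' by simp
  then have "(1 - monom 1 1) ^ p = (1 - monom 1 p) + smult (int p) ((1 - monom 1 1) * (- w0))"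
    unfolding D_def by (metis diff_add_cancel add.commute)
  then show ?thesis by blast
qed



lemma level1:
  assumes "prime p"
  shows "good p p (vf p N) ((1 - monom 1 1) ^ N)"
proof (induction N rule: less_induct)
  case (less N)
  have p1: "p > 1" using assms prime_gt_1_nat by blast
  show ?case
  proof (cases "N < p")
    case True
    then have "vf p N = 0" using vf_div[OF assms, of N] by simp
    then show ?thesis by (simp add: good_0)
  next
    case False
    define M where "M = N div p"
    define s where "s = N mod p"
    have "p div p \<le> N div p" using False by (intro div_le_mono) simp
    then have M1: "M \<ge> 1" using p1 unfolding M_def by simp
    have MN: "M < N" using False p1 unfolding M_def by (intro div_less_dividend) auto
    have Ne: "N = p * M + s" unfolding M_def s_def by simp
    obtain w where w: "(1 - monom 1 1) ^ p = (1 - monom 1 p) + smult (int p) ((1 - monom 1 1) * w)"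
      using u_pow_p[OF assms] by blast
    define u :: "int poly" where "u = 1 - monom 1 1"
    define A :: "int poly" where "A = 1 - monom 1 p"
    define B :: "int poly" where "B = smult (int p) (u * w)"
    have up: "u ^ p = B + A" using w unfolding u_def A_def B_def by simp
    have "u ^ N = u ^ (p * M) * u ^ s" unfolding Ne by (simp add: power_add)
    also have "\<dots> = u ^ s * (B + A) ^ M" by (simp add: power_mult up)
    finally have "u ^ N = u ^ s * (B + A) ^ M" .
    also have "\<dots> = u ^ s * (\<Sum>i\<le>M. of_nat (M choose i) * B ^ i * A ^ (M - i))"
      by (simp only: binomial_ring)
    also have "\<dots> = (\<Sum>i\<le>M. smult (int (M choose i)) (A ^ (M - i) * smult (int p ^ i) ((w ^ i * u ^ s) * u ^ i)))"
      unfolding sum_distrib_left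
    proof (intro sum.cong refl)
      fix i
      show "u ^ s * (of_nat (M choose i) * B ^ i * A ^ (M - i)) =
         smult (int (M choose i)) (A ^ (M - i) * smult (int p ^ i) (w ^ i * u ^ s * u ^ i))"
        unfolding B_def smult_power by (simp add: of_nat_poly power_mult_distrib algebra_simps)
    qed
    finally have eq: "u ^ N = \<dots>" .
    have "good p p (vf p N) (\<Sum>i\<le>M. smult (int (M choose i)) (A ^ (M - i) * smult (int p ^ i) ((w ^ i * u ^ s) * u ^ i)))"
    proof (intro good_sum)
      fix i assume i: "i \<in> {..M}"
      then have "i < N" using MN by simp
      then have "good p p (vf p i) (u ^ i)" using less.IH unfolding u_def by blast
      then have "good p p (vf p i) ((w ^ i * u ^ s) * u ^ i)" by (rule good_mult)
      then have "good p p (i + vf p i) (smult (int p ^ i) ((w ^ i * u ^ s) * u ^ i))"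
        by (rule good_smult) simp
      then have "good p p ((M - i) + vf p (M - i) + (i + vf p i)) (A ^ (M - i) * smult (int p ^ i) ((w ^ i * u ^ s) * u ^ i))"
        unfolding A_def using p1 by (intro good_iter) auto
      then have "good p p (multiplicity (int p) (int (M choose i)) + ((M - i) + vf p (M - i) + (i + vf p i)))
          (smult (int (M choose i)) (A ^ (M - i) * smult (int p ^ i) ((w ^ i * u ^ s) * u ^ i)))"
        by (rule good_smult) (rule multiplicity_dvd)
      moreover have "vf p N = multiplicity (int p) (int (M choose i)) + ((M - i) + vf p (M - i) + (i + vf p i))"
        using vf_div[OF assms, of N] vf_binom[OF assms, of i M] i unfolding M_def by auto
      ultimately show "good p p (vf p N) (smult (int (M choose i)) (A ^ (M - i) * smult (int p ^ i) ((w ^ i * u ^ s) * u ^ i)))"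
        by simp
    qed simp
    then show ?thesis using eq unfolding u_def by simp
  qed
qed



lemma lam_level:
  assumes "q > 0" "p > 0"
  shows "lam p (p * q) l ((1 - monom 1 q) ^ K) r =
    (if int q dvd r then lam p p l ((1 - monom 1 1) ^ K) (r div int q) else 0)"
proof (cases "int q dvd r")
  case True
  then obtain r' where r: "r = int q * r'" by blast
  have "chi p (p * q) l r (q * i) = chi p p l r' (1 * i)" for i
  proof -
    have "(int (q * i) mod int (p * q) = r mod int (p * q)) \<longleftrightarrow> (int i mod int p = r' mod int p)"
      unfolding r using assms by (simp add: mult.commute[of p q] mult_mod_right[symmetric])
    moreover have "(int (q * i) - r) div int (p * q) = (int i - r') div int p"
      unfolding r using assms by (simp add: mult.commute[of p q] right_diff_distrib[symmetric])
    ultimately show ?thesis unfolding chi_def by simp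
  qed
  then show ?thesis using True r assms by (simp add: lam_one_minus_pow)
next
  case False
  have "chi p (p * q) l r (q * i) = 0" for i
  proof -
    have "\<not> (int (q * i) mod int (p * q) = r mod int (p * q))"
    proof
      assume "int (q * i) mod int (p * q) = r mod int (p * q)"
      then have "int (p * q) dvd int (q * i) - r" using mod_eq_dvd_iff by blast
      then have "int q dvd int (q * i) - r" by (metis dvd_mult_right of_nat_mult)
      moreover have "int q dvd int (q * i)" by simp
      ultimately have "int q dvd int (q * i) - (int (q * i) - r)" using dvd_diff by blast
      then have "int q dvd r" by simp
      then show False using False by simp
    qed
    then show ?thesis unfolding chi_def by simp
  qed
  then show ?thesis using False by (simp add: lam_one_minus_pow)
qed

lemma good_level:
  assumes "prime p" "q > 0"
  shows "int p ^ vf p K dvd lam p (p * q) l ((1 - monom 1 q) ^ K) r"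
  using level1[OF assms(1), of K] assms prime_gt_0_nat[OF assms(1)]
  by (auto simp: lam_level good_def)

lemma carry_closed:
  assumes "p > 0"
  shows "carry p a b i = (a mod p ^ i + b mod p ^ i) div p ^ i"
proof (induction i)
  case 0 then show ?case by simp
next
  case (Suc i)
  let ?P = "p ^ i"
  have P0: "?P > 0" using assms by simp
  have ea: "a mod p ^ Suc i = ?P * (a div ?P mod p) + a mod ?P" by (metis mod_mult2_eq power_Suc2)
  have eb: "b mod p ^ Suc i = ?P * (b div ?P mod p) + b mod ?P" by (metis mod_mult2_eq power_Suc2)
  have ec: "X div p ^ Suc i = X div ?P div p" for X by (metis div_mult2_eq power_Suc2)
  have ed: "?P * (a div ?P mod p) + a mod ?P + (?P * (b div ?P mod p) + b mod ?P)
      = (a mod ?P + b mod ?P) + ?P * (a div ?P mod p + b div ?P mod p)" by (simp add: algebra_simps)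
  have "(a mod p ^ Suc i + b mod p ^ Suc i) div p ^ Suc i
      = ((a mod ?P + b mod ?P) + ?P * (a div ?P mod p + b div ?P mod p)) div ?P div p"
    unfolding ea eb ec ed ..
  also have "\<dots> = (a div ?P mod p + b div ?P mod p + (a mod ?P + b mod ?P) div ?P) div p"
    using P0 by simp
  finally show ?case using Suc.IH by simp
qed

lemma legendre:
  assumes "prime p" "N < p ^ K"
  shows "vf p N = (\<Sum>i<K. N div p ^ Suc i)"
  using assms(2)
proof (induction K arbitrary: N)
  case 0 then show ?case by simp
next
  case (Suc K)
  have p1: "p > 1" using assms prime_gt_1_nat by blast
  have "N div p < p ^ K" using Suc.prems p1 by (simp add: div_less_iff_less_mult mult.commute)
  then have ih: "vf p (N div p) = (\<Sum>i<K. N div p div p ^ Suc i)" by (rule Suc.IH)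
  have "(\<Sum>i<Suc K. N div p ^ Suc i) = N div p ^ Suc 0 + (\<Sum>i<K. N div p ^ Suc (Suc i))"
    by (rule sum.lessThan_Suc_shift)
  also have "(\<Sum>i<K. N div p ^ Suc (Suc i)) = (\<Sum>i<K. N div p div p ^ Suc i)"
    by (intro sum.cong refl) (simp add: div_mult2_eq)
  finally show ?case using vf_div[OF assms(1), of N] ih by simp
qed

lemma div_add_split:
  assumes "(P::nat) > 0"
  shows "(a + b) div P = a div P + b div P + (a mod P + b mod P) div P"
proof -
  have "a + b = (a mod P + b mod P) + (P * (a div P) + P * (b div P))"
    using mult_div_mod_eq[of P a] mult_div_mod_eq[of P b] by linarith
  then have "a + b = (a mod P + b mod P) + P * (a div P + b div P)" by (simp add: distrib_left)
  then have "(a + b) div P = ((a mod P + b mod P) + P * (a div P + b div P)) div P" by simp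
  also have "\<dots> = (a mod P + b mod P) div P + (a div P + b div P)" using assms by simp
  finally show ?thesis by simp
qed

lemma carry_large:
  assumes "p > 0" "a + b < p ^ K" "K \<le> i"
  shows "carry p a b i = 0"
proof -
  have "p ^ K \<le> p ^ i" using assms by (intro power_increasing) auto
  moreover have "a mod p ^ i + b mod p ^ i \<le> a + b" by (simp add: add_mono)
  ultimately show ?thesis using assms by (simp add: carry_closed)
qed

lemma less_pow: "(p::nat) > 1 \<Longrightarrow> n < p ^ n"
  using less_exp[of n] power_mono[of 2 p n] by linarith

lemma tau_finite:
  assumes "p > 1"
  shows "finite {i. carry p a b (Suc i) \<noteq> 0}"
proof -
  have "a + b < p ^ (a + b)" using assms by (rule less_pow)
  have "i < a + b" if "carry p a b (Suc i) \<noteq> 0" for i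
  proof (rule ccontr)
    assume "\<not> i < a + b"
    then have "carry p a b (Suc i) = 0"
      using carry_large[of p a b "a+b" "Suc i"] assms \<open>a + b < p ^ (a + b)\<close> by simp
    then show False using that by simp
  qed
  then have "{i. carry p a b (Suc i) \<noteq> 0} \<subseteq> {..<a+b}" by auto
  then show ?thesis by (rule finite_subset) simp
qed

lemma kummer:
  assumes "prime p"
  shows "tau p a b \<le> multiplicity (int p) (int ((a + b) choose a))"
proof -
  have p1: "p > 1" using assms prime_gt_1_nat by blast
  define K where "K = a + b"
  have K: "a + b < p ^ K" unfolding K_def using p1 by (rule less_pow)
  have Ka: "a < p ^ K" "b < p ^ K" using K by auto
  have m: "multiplicity (int p) (int ((a + b) choose a)) = vf p (a + b) - vf p a - vf p b"
    using vf_binom[OF assms, of a "a+b"] by simp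
  have "vf p (a + b) = (\<Sum>i<K. a div p ^ Suc i) + (\<Sum>i<K. b div p ^ Suc i) + (\<Sum>i<K. carry p a b (Suc i))"
    unfolding legendre[OF assms K] sum.distrib[symmetric]
  proof (intro sum.cong refl)
    fix i
    have c: "carry p a b (Suc i) = (a mod p ^ Suc i + b mod p ^ Suc i) div p ^ Suc i"
      by (rule carry_closed) (use p1 in simp)
    show "(a + b) div p ^ Suc i = a div p ^ Suc i + b div p ^ Suc i + carry p a b (Suc i)"
      unfolding c using p1 by (intro div_add_split) simp
  qed
  then have m2: "multiplicity (int p) (int ((a + b) choose a)) = (\<Sum>i<K. carry p a b (Suc i))"
    unfolding m legendre[OF assms Ka(1)] legendre[OF assms Ka(2)] by simp
  have "i < K" if "carry p a b (Suc i) \<noteq> 0" for i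
  proof (rule ccontr)
    assume "\<not> i < K"
    then have "carry p a b (Suc i) = 0"
      using carry_large[of p a b K "Suc i"] p1 K by simp
    then show False using that by simp
  qed
  then have sub: "{i. carry p a b (Suc i) \<noteq> 0} \<subseteq> {..<K}" by auto
  have "tau p a b = (\<Sum>i\<in>{i. carry p a b (Suc i) \<noteq> 0}. 1)" unfolding tau_def by simp
  also have "\<dots> \<le> (\<Sum>i\<in>{i. carry p a b (Suc i) \<noteq> 0}. carry p a b (Suc i))"
    by (intro sum_mono) auto
  also have "\<dots> \<le> (\<Sum>i<K. carry p a b (Suc i))"
    by (intro sum_mono2 sub) auto
  finally show ?thesis using m2 by simp
qed



definition gq :: "nat \<Rightarrow> nat \<Rightarrow> nat \<Rightarrow> nat" where
  "gq p al t = (if p ^ (al - 1) dvd t then 0 else al - 1 - multiplicity (int p) (int t))"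

lemma mult_nat_dvd:
  assumes "int p ^ e dvd int t"
  shows "p ^ e dvd t"
  using assms by (metis of_nat_power int_dvd_int_iff)

lemma mult_lt:
  assumes "prime p" "t \<noteq> 0" "\<not> p ^ k dvd t"
  shows "multiplicity (int p) (int t) < k"
proof (rule multiplicity_lessI)
  show "\<not> int p ^ k dvd int t" using assms(3) by (metis of_nat_power int_dvd_int_iff)
qed (use assms prime_gt_1_nat in auto)

lemma binom_q:
  assumes "prime p" "0 < t" "t < p ^ (al - 1)"
  shows "al - 1 \<le> multiplicity (int p) (int t) + multiplicity (int p) (int (p ^ (al - 1) choose t))"
proof -
  define q where "q = p ^ (al - 1)"
  obtain k where k: "t = Suc k" using assms(2) by (cases t) auto
  have q0: "q > 0" unfolding q_def using prime_gt_0_nat[OF assms(1)] by simp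
  obtain n where n: "q = Suc n" using q0 by (metis Suc_pred)
  have e: "Suc k * (Suc n choose Suc k) = Suc n * (n choose k)" by (rule Suc_times_binomial)
  have kn: "k \<le> n" using assms(3) k n unfolding q_def by simp
  have e2: "int t * int (q choose t) = int p ^ (al - 1) * int (n choose k)"
    using e k n unfolding q_def by (metis of_nat_mult of_nat_power)
  have pe: "prime_elem (int p)" using pp[OF assms(1)] .
  have tq: "t \<le> q" using assms(3) unfolding q_def by simp
  have nz1: "int t \<noteq> 0" "int (q choose t) \<noteq> 0" using assms(2) tq by auto
  have nz2: "int (n choose k) \<noteq> 0" using kn by simp
  have "multiplicity (int p) (int t) + multiplicity (int p) (int (q choose t))
      = multiplicity (int p) (int t * int (q choose t))"
    by (rule prime_elem_multiplicity_mult_distrib[OF pe nz1, symmetric])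
  also have "\<dots> = multiplicity (int p) (int p ^ (al - 1) * int (n choose k))" by (simp only: e2)
  also have "\<dots> = al - 1 + multiplicity (int p) (int (n choose k))"
    using prime_elem_multiplicity_mult_distrib[OF pe _ nz2, of "int p ^ (al - 1)"] pe
      prime_gt_0_nat[OF assms(1)]
    by (simp add: prime_elem_multiplicity_power_distrib)
  finally show ?thesis unfolding q_def by linarith
qed

definition EE :: "nat \<Rightarrow> int poly" where
  "EE q = (1 - monom 1 1) ^ q - (1 - monom 1 q)"

lemma coeff_E:
  assumes "prime p" "al \<ge> 1"
  shows "int p ^ max 1 (gq p al t) dvd coeff (EE (p ^ (al - 1))) t"
proof -
  define q where "q = p ^ (al - 1)"
  have p1: "p > 1" using assms prime_gt_1_nat by blast
  have q1: "q \<ge> 1" unfolding q_def using p1 by simp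
  have c: "coeff (EE q) t = (if t \<le> q then (-1) ^ t * int (q choose t) else 0)
        - ((if t = 0 then 1 else 0) - (if t = q then 1 else 0))"
    unfolding EE_def coeff_diff coeff_one_minus_pow by (simp add: coeff_monom)
  consider "t = 0" | "0 < t" "t < q" | "t = q" | "t > q" by linarith
  then have "int p ^ max 1 (gq p al t) dvd coeff (EE q) t"
  proof cases
    case 1 then show ?thesis using c q1 by simp
  next
    case 2
    have nd: "\<not> q dvd t" using 2 by (auto dest: dvd_imp_le)
    have "multiplicity (int p) (int t) < al - 1"
      using mult_lt[OF assms(1), of t "al - 1"] 2 nd unfolding q_def by simp
    then have g: "max 1 (gq p al t) = al - 1 - multiplicity (int p) (int t)"
      using nd unfolding gq_def q_def by simp
    have "max 1 (gq p al t) \<le> multiplicity (int p) (int (q choose t))"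
      unfolding g using binom_q[OF assms(1), of t al] 2 unfolding q_def by simp
    then have "int p ^ max 1 (gq p al t) dvd int (q choose t)"
      by (rule multiplicity_dvd')
    then show ?thesis using c 2 by simp
  next
    case 3
    have g: "gq p al t = 0" using 3 unfolding gq_def q_def by simp
    have "int p dvd (-1) ^ q + 1"
    proof (cases "p = 2 \<and> al \<ge> 2")
      case True
      then have "even q" unfolding q_def by simp
      then show ?thesis using True by simp
    next
      case False
      then have "odd q"
      proof (cases "p = 2")
        case True then have "al = 1" using False assms(2) by simp
        then show ?thesis unfolding q_def by simp
      next
        case False
        then have "odd p" using assms(1) prime_odd_nat p1 by auto
        then show ?thesis unfolding q_def by simp
      qed
      then show ?thesis by simp
    qed
    then show ?thesis using c 3 g q1 by simp
  next
    case 4 then show ?thesis using c by simp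
  qed
  then show ?thesis unfolding q_def .
qed



lemma gq_ultra:
  assumes "prime p" "t \<le> j"
  shows "gq p al j \<le> max (gq p al t) (gq p al (j - t))"
proof (cases "p ^ (al - 1) dvd j")
  case True then show ?thesis by (simp add: gq_def)
next
  case False
  define e where "e = multiplicity (int p) (int j)"
  have j0: "j \<noteq> 0" using False by (metis dvd_0_right)
  have e_lt: "e < al - 1" unfolding e_def using mult_lt[OF assms(1) j0 False] .
  have nd: "\<not> p ^ Suc e dvd j"
  proof
    assume "p ^ Suc e dvd j"
    then have "int p ^ Suc e dvd int j" by (metis of_nat_power int_dvd_int_iff)
    then have "Suc e \<le> e" unfolding e_def using j0 prime_gt_1_nat[OF assms(1)]
      by (intro multiplicity_geI) auto
    then show False by simp
  qed
  have gj: "gq p al j = al - 1 - e" using False unfolding gq_def e_def by simp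
  have key: "gq p al x \<ge> al - 1 - e" if "\<not> p ^ Suc e dvd x" for x
  proof -
    have x0: "x \<noteq> 0" using that by (metis dvd_0_right)
    have nq: "\<not> p ^ (al - 1) dvd x"
      using that e_lt by (meson dvd_trans le_imp_power_dvd Suc_leI)
    have "multiplicity (int p) (int x) < Suc e" using mult_lt[OF assms(1) x0 that] .
    then show ?thesis using nq unfolding gq_def by simp
  qed
  have "\<not> p ^ Suc e dvd t \<or> \<not> p ^ Suc e dvd (j - t)"
  proof (rule ccontr)
    assume "\<not> ?thesis"
    then have "p ^ Suc e dvd t + (j - t)" by auto
    then show False using nd assms(2) by simp
  qed
  then show ?thesis using key gj by fastforce
qed

lemma coeff_Ei:
  assumes "prime p" "al \<ge> 1"
  shows "int p ^ (i + max 1 (gq p al j)) dvd coeff (EE (p ^ (al - 1)) ^ Suc i) j"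
proof (induction i arbitrary: j)
  case 0 then show ?case using coeff_E[OF assms, of j] by simp
next
  case (Suc i)
  let ?E = "EE (p ^ (al - 1))"
  have eq: "coeff (?E ^ Suc (Suc i)) j = (\<Sum>t\<le>j. coeff ?E t * coeff (?E ^ Suc i) (j - t))"
    by (subst power_Suc) (rule coeff_mult)
  have tm: "int p ^ (Suc i + max 1 (gq p al j)) dvd coeff ?E t * coeff (?E ^ Suc i) (j - t)"
    if "t \<le> j" for t
  proof -
    have u: "gq p al j \<le> max (gq p al t) (gq p al (j - t))" by (rule gq_ultra[OF assms(1) that])
    have "Suc i + max 1 (gq p al j) \<le> max 1 (gq p al t) + (i + max 1 (gq p al (j - t)))"
      using u by (simp add: max_def split: if_splits)
    then have "int p ^ (Suc i + max 1 (gq p al j)) dvd int p ^ (max 1 (gq p al t) + (i + max 1 (gq p al (j - t))))"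
      by (rule le_imp_power_dvd)
    moreover have "int p ^ (max 1 (gq p al t) + (i + max 1 (gq p al (j - t)))) dvd coeff ?E t * coeff (?E ^ Suc i) (j - t)"
      using mult_dvd_mono[OF coeff_E[OF assms, of t] Suc.IH[of "j - t"]]
      by (simp only: power_add[of "int p" "max 1 (gq p al t)"])
    ultimately show ?thesis by (rule dvd_trans)
  qed
  show ?case unfolding eq by (intro dvd_sum) (rule tm, simp)
qed



lemma sum_case:
  fixes a b q s :: nat
  assumes "a < q" "b < q" "(a + b) mod q = s" "a \<le> s"
  shows "a + b = s"
proof (cases "a + b < q")
  case True then show ?thesis using assms by simp
next
  case False
  then have "(a + b) mod q = (a + b - q) mod q" by (simp add: le_mod_geq)
  also have "\<dots> = a + b - q" using assms by simp
  finally have "s = a + b - q" using assms by simp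
  then show ?thesis using assms False by linarith
qed

lemma carry_cmp:
  assumes "prime p" "al \<ge> 1" "a < p ^ (al - 1)" "b < p ^ (al - 1)"
    "(a + b) mod p ^ (al - 1) = s" "d \<le> s" "(t + d) mod p ^ (al - 1) = a"
  shows "tau p a b \<le> tau p d (s - d) + gq p al t"
proof -
  define q where "q = p ^ (al - 1)"
  have p1: "p > 1" using assms prime_gt_1_nat by blast
  have q0: "q > 0" unfolding q_def using p1 by simp
  have sq: "s < q" using assms(5) q0 unfolding q_def by auto
  show ?thesis
  proof (cases "q dvd t")
    case True
    have "(t + d) mod q = d mod q" using True by (auto elim!: dvdE)
    then have "d = a" using assms(6,7) sq unfolding q_def by simp
    then have "a + b = s" using sum_case[of a q b s] assms unfolding q_def by simp
    then have "s - d = b" using \<open>d = a\<close> by simp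
    then show ?thesis using \<open>d = a\<close> by simp
  next
    case False
    define e where "e = multiplicity (int p) (int t)"
    have t0: "t \<noteq> 0" using False by (metis dvd_0_right)
    have e_lt: "e < al - 1" unfolding e_def using mult_lt[OF assms(1) t0] False unfolding q_def by simp
    have g: "gq p al t = al - 1 - e" using False unfolding gq_def e_def q_def by simp
    define P where "P = p ^ e"
    have Pt: "P dvd t" unfolding P_def e_def by (rule mult_nat_dvd) (rule multiplicity_dvd)
    have Pq: "P dvd q" unfolding P_def q_def using e_lt by (intro le_imp_power_dvd) simp
    have ha: "a mod P = d mod P"
    proof -
      have "a mod P = (t + d) mod q mod P" using assms(7) unfolding q_def by simp
      also have "\<dots> = (t + d) mod P" using Pq by (rule mod_mod_cancel)
      also have "\<dots> = d mod P" using Pt by (auto elim!: dvdE)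
      finally show ?thesis .
    qed
    have hb: "b mod P = (s - d) mod P"
    proof -
      have "(a + b) mod P = s mod P" using assms(5) mod_mod_cancel[OF Pq, of "a + b"] unfolding q_def by simp
      then have "[a + b = d + (s - d)] (mod P)" using assms(6) by (simp add: cong_def)
      moreover have "[a = d] (mod P)" using ha by (simp add: cong_def)
      ultimately have "[d + b = d + (s - d)] (mod P)"
        by (metis cong_add cong_refl cong_sym cong_trans)
      then have "[b = s - d] (mod P)" by (simp only: cong_add_lcancel_nat)
      then show ?thesis by (simp add: cong_def)
    qed
    have same: "carry p a b i = carry p d (s - d) i" if "i \<le> e" for i
    proof -
      have d: "p ^ i dvd P" unfolding P_def using that by (rule le_imp_power_dvd)
      have "a mod p ^ i = d mod p ^ i" using ha mod_mod_cancel[OF d, of a] mod_mod_cancel[OF d, of d] by simp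
      moreover have "b mod p ^ i = (s - d) mod p ^ i"
        using hb mod_mod_cancel[OF d, of b] mod_mod_cancel[OF d, of "s - d"] by simp
      ultimately show ?thesis using p1 by (simp add: carry_closed)
    qed
    have ab: "a + b < p ^ al"
    proof -
      have "a + b < 2 * q" using assms(3,4) unfolding q_def by simp
      also have "\<dots> \<le> p * q" using p1 by simp
      also have "\<dots> = p ^ al" unfolding q_def using assms(2) by (simp add: power_eq_if)
      finally show ?thesis .
    qed
    have sub: "{i. carry p a b (Suc i) \<noteq> 0} \<subseteq> {i. carry p d (s - d) (Suc i) \<noteq> 0} \<union> {e..<al - 1}"
    proof
      fix i assume i: "i \<in> {i. carry p a b (Suc i) \<noteq> 0}"
      show "i \<in> {i. carry p d (s - d) (Suc i) \<noteq> 0} \<union> {e..<al - 1}"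
      proof (cases "Suc i \<le> e")
        case True then show ?thesis using i same[OF True] by simp
      next
        case False
        have "Suc i < al"
        proof (rule ccontr)
          assume "\<not> Suc i < al"
          then have "carry p a b (Suc i) = 0" using carry_large[of p a b al "Suc i"] ab p1 by simp
          then show False using i by simp
        qed
        then have "i \<in> {e..<al - 1}" using False by simp
        then show ?thesis by blast
      qed
    qed
    have "tau p a b \<le> card ({i. carry p d (s - d) (Suc i) \<noteq> 0} \<union> {e..<al - 1})"
      unfolding tau_def using tau_finite[OF p1, of d "s - d"] by (intro card_mono sub) blast
    also have "\<dots> \<le> tau p d (s - d) + card {e..<al - 1}" unfolding tau_def by (rule card_Un_le)
    finally show ?thesis using g by simp
  qed
qed



lemma coeff_G:
  assumes "prime p" "al \<ge> 1" "a < p ^ (al - 1)" "b < p ^ (al - 1)"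
    "(a + b) mod p ^ (al - 1) = s" "c mod p ^ (al - 1) = a"
  shows "int p ^ (vf p i + tau p a b) dvd coeff (EE (p ^ (al - 1)) ^ i * (1 - monom 1 1) ^ s) c"
proof -
  define q where "q = p ^ (al - 1)"
  have p1: "p > 1" using assms prime_gt_1_nat by blast
  have q0: "q > 0" unfolding q_def using p1 by simp
  have sq: "s < q" using assms(5) q0 unfolding q_def by auto
  have tm: "int p ^ (vf p i + tau p a b) dvd coeff (EE q ^ i) t * coeff ((1 - monom 1 1) ^ s) (c - t)"
    if t: "t \<le> c" for t
  proof (cases "c - t \<le> s")
    case False then show ?thesis unfolding coeff_one_minus_pow by simp
  next
    case True
    define d where "d = c - t"
    have cd: "coeff ((1 - monom 1 1) ^ s :: int poly) (c - t) = (-1) ^ d * int (s choose d)"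
      using True unfolding d_def coeff_one_minus_pow by simp
    have "tau p d (s - d) \<le> multiplicity (int p) (int ((d + (s - d)) choose d))" by (rule kummer[OF assms(1)])
    then have "tau p d (s - d) \<le> multiplicity (int p) (int (s choose d))" using True unfolding d_def by simp
    then have kum: "int p ^ tau p d (s - d) dvd coeff ((1 - monom 1 1) ^ s :: int poly) (c - t)"
      unfolding cd by (intro dvd_mult multiplicity_dvd')
    show ?thesis
    proof (cases i)
      case 0
      show ?thesis
      proof (cases "t = 0")
        case False then show ?thesis using 0 by simp
      next
        case True
        then have "c = d" unfolding d_def by simp
        then have "c < q" using \<open>c - t \<le> s\<close> sq True by simp
        then have "c = a" using assms(6) unfolding q_def by simp
        then have "a + b = s" using sum_case[of a q b s] assms \<open>c - t \<le> s\<close> True unfolding q_def by simp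
        then have "s - d = b" "d = a" using \<open>c = a\<close> \<open>c = d\<close> by auto
        then show ?thesis using kum 0 True by simp
      qed
    next
      case (Suc i')
      have e: "int p ^ (i' + max 1 (gq p al t)) dvd coeff (EE q ^ i) t"
        unfolding Suc q_def by (rule coeff_Ei[OF assms(1,2)])
      have "(t + d) mod q = a" using t assms(6) unfolding d_def q_def by simp
      then have cc: "tau p a b \<le> tau p d (s - d) + gq p al t"
        using carry_cmp[OF assms(1-5), of d t] True unfolding d_def q_def by simp
      have "vf p i \<le> i'" using vf_le[OF assms(1), of i] Suc by simp
      then have "vf p i + tau p a b \<le> (i' + max 1 (gq p al t)) + tau p d (s - d)"
        using cc by simp
      then have "int p ^ (vf p i + tau p a b) dvd int p ^ ((i' + max 1 (gq p al t)) + tau p d (s - d))"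
        by (rule le_imp_power_dvd)
      moreover have "int p ^ ((i' + max 1 (gq p al t)) + tau p d (s - d)) dvd
          coeff (EE q ^ i) t * coeff ((1 - monom 1 1) ^ s) (c - t)"
        unfolding power_add[of "int p" "i' + max 1 (gq p al t)"] by (rule mult_dvd_mono[OF e kum])
      ultimately show ?thesis by (rule dvd_trans)
    qed
  qed
  have eq: "coeff (EE q ^ i * (1 - monom 1 1) ^ s) c = (\<Sum>t\<le>c. coeff (EE q ^ i) t * coeff ((1 - monom 1 1) ^ s) (c - t))"
    by (rule coeff_mult)
  have "int p ^ (vf p i + tau p a b) dvd coeff (EE q ^ i * (1 - monom 1 1) ^ s) c"
    unfolding eq by (intro dvd_sum) (rule tm, simp)
  then show ?thesis unfolding q_def .
qed



lemma main_int:
  assumes "prime p" "al \<ge> 1"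
  shows "int p ^ (vf p (n div p ^ (al - 1)) + tau p (nat (r mod int (p ^ (al - 1)))) (nat ((int n - r) mod int (p ^ (al - 1)))))
     dvd lam p (p ^ al) l ((1 - monom 1 1) ^ n) r"
proof -
  define q where "q = p ^ (al - 1)"
  define N where "N = n div q"
  define s where "s = n mod q"
  define a where "a = nat (r mod int q)"
  define b where "b = nat ((int n - r) mod int q)"
  define u :: "int poly" where "u = 1 - monom 1 1"
  define A :: "int poly" where "A = 1 - monom 1 q"
  define E where "E = EE q"
  have p1: "p > 1" using assms prime_gt_1_nat by blast
  have q0: "q > 0" unfolding q_def using p1 by simp
  have pal: "p ^ al = p * q" unfolding q_def using assms(2) by (simp add: power_eq_if)
  have ia: "int a = r mod int q" unfolding a_def using q0 by simp
  have ib: "int b = (int n - r) mod int q" unfolding b_def using q0 by simp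
  have aq: "a < q" using ia q0 by (metis of_nat_less_iff pos_mod_bound of_nat_0_less_iff)
  have bq: "b < q" using ib q0 by (metis of_nat_less_iff pos_mod_bound of_nat_0_less_iff)
  have "int ((a + b) mod q) = (r mod int q + (int n - r) mod int q) mod int q"
    using ia ib by (simp add: of_nat_mod)
  also have "\<dots> = (r + (int n - r)) mod int q" by (simp add: mod_add_eq)
  also have "\<dots> = int s" unfolding s_def by (simp add: of_nat_mod)
  finally have abs: "(a + b) mod q = s" by simp
  have "u ^ n = (u ^ q) ^ N * u ^ s"
    unfolding N_def s_def by (metis div_mult_mod_eq power_add power_mult mult.commute)
  also have "u ^ q = E + A" unfolding E_def EE_def u_def A_def by simp
  also have "(E + A) ^ N = (\<Sum>i\<le>N. of_nat (N choose i) * E ^ i * A ^ (N - i))" by (rule binomial_ring)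
  finally have eq: "u ^ n = (\<Sum>i\<le>N. smult (int (N choose i)) ((E ^ i * u ^ s) * A ^ (N - i)))"
    by (simp add: sum_distrib_left sum_distrib_right of_nat_poly algebra_simps)
  have tm: "int p ^ (vf p N + tau p a b) dvd lam p (p * q) l (smult (int (N choose i)) ((E ^ i * u ^ s) * A ^ (N - i))) r"
    if i: "i \<le> N" for i
  proof -
    have "int p ^ (vf p i + tau p a b + vf p (N - i)) dvd lam p (p * q) l ((E ^ i * u ^ s) * A ^ (N - i)) r"
      unfolding lam_mult
    proof (intro dvd_sum)
      fix c
      show "int p ^ (vf p i + tau p a b + vf p (N - i)) dvd
          coeff (E ^ i * u ^ s) c * lam p (p * q) l (A ^ (N - i)) (r - int c)"
      proof (cases "int q dvd r - int c")
        case False then show ?thesis unfolding A_def using q0 p1 by (simp add: lam_level)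
      next
        case True
        then have "int c mod int q = r mod int q" by (metis mod_eq_dvd_iff dvd_minus_iff minus_diff_eq)
        then have "int (c mod q) = int a" using ia by (simp add: of_nat_mod)
        then have cm: "c mod q = a" by simp
        have "int p ^ (vf p i + tau p a b) dvd coeff (E ^ i * u ^ s) c"
          unfolding E_def u_def q_def
          by (rule coeff_G[OF assms aq[unfolded q_def] bq[unfolded q_def] abs[unfolded q_def] cm[unfolded q_def]])
        moreover have "int p ^ vf p (N - i) dvd lam p (p * q) l (A ^ (N - i)) (r - int c)"
          unfolding A_def by (rule good_level[OF assms(1) q0])
        ultimately show ?thesis unfolding power_add[of "int p" "vf p i + tau p a b"] by (rule mult_dvd_mono)
      qed
    qed
    then have "int p ^ (multiplicity (int p) (int (N choose i)) + (vf p i + tau p a b + vf p (N - i))) dvd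
        lam p (p * q) l (smult (int (N choose i)) ((E ^ i * u ^ s) * A ^ (N - i))) r"
      unfolding lam_smult power_add[of "int p" "multiplicity (int p) (int (N choose i))"]
      by (intro mult_dvd_mono multiplicity_dvd)
    moreover have "vf p N + tau p a b = multiplicity (int p) (int (N choose i)) + (vf p i + tau p a b + vf p (N - i))"
      using vf_binom[OF assms(1) i] by simp
    ultimately show ?thesis by metis
  qed
  have "int p ^ (vf p N + tau p a b) dvd lam p (p * q) l (u ^ n) r"
    unfolding eq lam_sum[OF finite_atMost] by (intro dvd_sum tm) simp
  then show ?thesis unfolding pal u_def N_def a_def b_def q_def .
qed



lemma ord_rat_div:
  assumes "prime p" "x \<noteq> 0" "y > 0"
  shows "ord_rat p (of_int x / of_int y) = int (multiplicity (int p) x) - int (multiplicity (int p) y)"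
proof -
  obtain a b' where qo: "quotient_of (of_int x / of_int y) = (a, b')" by (cases "quotient_of (of_int x / of_int y)") auto
  have b0: "b' > 0" using quotient_of_denom_pos[OF qo] .
  have e: "(of_int x / of_int y :: rat) = of_int a / of_int b'" using quotient_of_div[OF qo] .
  then have "(of_int (a * y) :: rat) = of_int (x * b')" using b0 assms(3)
    by (simp add: field_simps)
  then have ay: "a * y = x * b'" by (simp only: of_int_eq_iff)
  have a0: "a \<noteq> 0" using ay assms b0 by auto
  have pe: "prime_elem (int p)" using pp[OF assms(1)] .
  have "multiplicity (int p) a + multiplicity (int p) y = multiplicity (int p) x + multiplicity (int p) b'"
    using prime_elem_multiplicity_mult_distrib[OF pe a0, of y] prime_elem_multiplicity_mult_distrib[OF pe assms(2), of b']
      ay assms(3) b0 by simp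
  then show ?thesis unfolding ord_rat_def qo by simp
qed

lemma gchoose_W: "(fact l :: rat) * (of_int j gchoose l) = of_int (ff j l)"
  by (simp add: gbinomial_prod_rev ff_def atLeast0LessThan of_int_prod)

lemma T_eq:
  assumes "p > 0"
  shows "T p al l n r = of_int (lam p (p ^ al) l ((1 - monom 1 1) ^ n) r) / of_int (fact (flr p al n))"
proof -
  define m where "m = p ^ al"
  define S where "S = {k \<in> {0..n}. [int k = r] (mod int m)}"
  have "(fact l * of_nat p ^ l) * (\<Sum>k\<in>S. of_nat (n choose k) * (-1) ^ k * ((of_int ((int k - r) div int m) :: rat) gchoose l))
      = (\<Sum>k\<in>S. of_int ((-1) ^ k * int (n choose k) * W p l ((int k - r) div int m)))"
    unfolding sum_distrib_left
  proof (intro sum.cong refl)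
    fix k
    have "(fact l :: rat) * (of_int ((int k - r) div int m) gchoose l) = of_int (ff ((int k - r) div int m) l)"
      by (rule gchoose_W)
    then show "fact l * of_nat p ^ l * (of_nat (n choose k) * (- 1) ^ k * (of_int ((int k - r) div int m) gchoose l)) =
        (of_int ((- 1) ^ k * int (n choose k) * W p l ((int k - r) div int m)) :: rat)"
      unfolding W_def by (simp add: algebra_simps)
  qed
  also have "\<dots> = of_int (\<Sum>k\<in>S. (-1) ^ k * int (n choose k) * W p l ((int k - r) div int m))"
    by (rule of_int_sum[symmetric])
  also have "(\<Sum>k\<in>S. (-1) ^ k * int (n choose k) * W p l ((int k - r) div int m)) = lam p m l ((1 - monom 1 1) ^ n) r"
  proof -
    have "(\<Sum>k\<in>S. (-1) ^ k * int (n choose k) * W p l ((int k - r) div int m))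
      = (\<Sum>k\<in>{0..n}. if int k mod int m = r mod int m then (-1) ^ k * int (n choose k) * W p l ((int k - r) div int m) else 0)"
      unfolding S_def cong_def by (rule sum.inter_filter) simp
    also have "\<dots> = lam p m l ((1 - monom 1 1) ^ n) r"
      unfolding lam_one_minus_pow atLeast0AtMost by (intro sum.cong refl) (simp add: chi_def)
    finally show ?thesis .
  qed
  finally have e: "(fact l * of_nat p ^ l) * (\<Sum>k\<in>S. of_nat (n choose k) * (-1) ^ k * ((of_int ((int k - r) div int m) :: rat) gchoose l))
      = of_int (lam p m l ((1 - monom 1 1) ^ n) r)" .
  show ?thesis unfolding T_def m_def[symmetric] S_def[symmetric] using e
    by (simp add: field_simps)
qed

lemma carry_00: "carry p 0 0 i = 0"
  by (induction i) simp_all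

lemma tau_00: "tau p 0 0 = 0"
  unfolding tau_def by (simp add: carry_00)

theorem theorem2p1:
  fixes p \<alpha> l n :: nat and r :: int
  assumes "prime p"
  shows "T p \<alpha> l n r = 0 \<or>
         int (tau p (fracres p \<alpha> r) (fracres p \<alpha> (int n - r))) \<le> ord_rat p (T p \<alpha> l n r)"
proof -
  have p1: "p > 1" using assms prime_gt_1_nat by blast
  define F where "F = flr p \<alpha> n"
  define tt where "tt = tau p (fracres p \<alpha> r) (fracres p \<alpha> (int n - r))"
  define La where "La = lam p (p ^ \<alpha>) l ((1 - monom 1 1) ^ n) r"
  have dv: "int p ^ (vf p F + tt) dvd La"
  proof (cases "\<alpha> = 0")
    case True
    have F: "F = p * n" unfolding F_def flr_def using True by simp
    have tt: "tt = 0" unfolding tt_def fracres_def using True by (simp add: tau_00)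
    have "good p 1 (n + vf p n + 0) ((1 - monom 1 1) ^ n * 1)"
      by (intro good_iter good_0) simp
    moreover have "vf p F = n + vf p n" unfolding F using vf_div[OF assms, of "p * n"] p1 by simp
    ultimately show ?thesis unfolding La_def good_def tt using True by simp
  next
    case False
    then have a1: "\<alpha> \<ge> 1" by simp
    show ?thesis using main_int[OF assms a1, of n r l] False
      unfolding La_def F_def tt_def flr_def fracres_def by simp
  qed
  show ?thesis
  proof (cases "T p \<alpha> l n r = 0")
    case True then show ?thesis by simp
  next
    case False
    have Teq: "T p \<alpha> l n r = of_int La / of_int (fact F)"
      unfolding La_def F_def using T_eq p1 by simp
    then have La0: "La \<noteq> 0" using False by auto
    have ord: "ord_rat p (T p \<alpha> l n r) = int (multiplicity (int p) La) - int (vf p F)"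
      unfolding Teq vf_def by (rule ord_rat_div[OF assms La0]) simp
    have "vf p F + tt \<le> multiplicity (int p) La"
      using dv La0 p1 by (intro multiplicity_geI) auto
    then show ?thesis unfolding ord tt_def[symmetric] by simp
  qed
qed



end
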